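(* For $\varepsilon\in[0,1]$ let $\Phi_{\mathrm{feas}}(\varepsilon)=\{(\pi_1,\dots,\pi_N,\pi_c)\in\Pi^{N+1}:\|\pi_i-\pi_c\|_\infty\le\varepsilon\ \text{for all } i\}$ and $$S^{\mathrm{CAL}}(\varepsilon)=\arg\min_{(\pi_1,\dots,\pi_N,\pi_c)\in\Phi_{\mathrm{feas}}(\varepsilon)}\sum_{i=1}^N\|\Phi^\top\mu^{\pi_i}_i-\Phi^\top\mu^{\pi^{E_i}}_i\|_1 .$$ Then the set-valued map $S^{\mathrm{CAL}}:[0,1]\rightrightarrows\Pi^{N+1}$ is upper semicontinuous at $\varepsilon=0$.
   Context: Let $\mathcal{S},\mathcal{A}$ be finite sets, $\gamma\in(0,1)$, $\rho$ a probability distribution on $\mathcal{S}$, and for $i=1,\dots,N$ environment $i$ is the Markov decision process $(\mathcal{S},\mathcal{A},P^i,\gamma,\rho)$. $\Pi$ is the set of stationary policies $\pi:\mathcal{S}\to\Delta(\mathcal{A})$, identified with vectors $(\pi(s,a))_{(s,a)}\in\mathbb{R}^{|\mathcal{S}||\mathcal{A}|}$, and $\|\pi-\pi'\|_\infty=\max_{(s,a)}|\pi(s,a)-\pi'(s,a)|$. $\mu^\pi_i(s,a)=\sum_{t\ge0}\gamma^t\mathbb{P}^{\pi,i}_\rho[s_t=s,a_t=a]$ is the discounted occupation measure (trajectory law: $s_0\sim\rho$, $a_t\sim\pi(s_t,\cdot)$, $s_{t+1}\sim P^i(\cdot\mid s_t,a_t)$). Expert policies $\pi^{E_i}\in\Pi$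 and a cost basis matrix $\Phi\in\mathbb{R}^{|\mathcal{S}||\mathcal{A}|\times n_c}$ with columns of sup-norm at most $1$ are given. A set-valued map $F:X\rightrightarrows Y$ is upper semicontinuous at $x_0$ if for every neighborhood $U$ of the set $F(x_0)$ there is a neighborhood $W$ of $x_0$ with $F(x)\subset U$ for all $x\in W$. *)

theory Defs
  imports "HOL-Analysis.Analysis"
begin

definition policies :: "('s::finite \<Rightarrow> 'a::finite \<Rightarrow> real) set" where
  "policies = {\<pi>. (\<forall>s a. 0 \<le> \<pi> s a) \<and> (\<forall>s. (\<Sum>a\<in>UNIV. \<pi> s a) = 1)}"

definition linf_dist :: "('s::finite \<Rightarrow> 'a::finite \<Rightarrow> real) \<Rightarrow> ('s \<Rightarrow> 'a \<Rightarrow> real) \<Rightarrow> real" where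
  "linf_dist \<pi> \<pi>' = Max ((\<lambda>(s,a). \<bar>\<pi> s a - \<pi>' s a\<bar>) ` UNIV)"

text \<open>Marginal law of s_t: s_0 ~ rho, a_t ~ pi(s_t,.), s_{t+1} ~ P(.|s_t,a_t).
  P s a s' is the probability of moving from s to s' under action a.\<close>
primrec state_dist :: "('s::finite \<Rightarrow> 'a::finite \<Rightarrow> 's \<Rightarrow> real) \<Rightarrow> ('s \<Rightarrow> real)
    \<Rightarrow> ('s \<Rightarrow> 'a \<Rightarrow> real) \<Rightarrow> nat \<Rightarrow> 's \<Rightarrow> real" where
  "state_dist P \<rho> \<pi> 0 = \<rho>"
| "state_dist P \<rho> \<pi> (Suc t) =
     (\<lambda>s'. \<Sum>s\<in>UNIV. \<Sum>a\<in>UNIV. state_dist P \<rho> \<pi> t s * \<pi> s a * P s a s')"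

definition occ :: "real \<Rightarrow> ('s::finite \<Rightarrow> real) \<Rightarrow> ('s \<Rightarrow> 'a::finite \<Rightarrow> 's \<Rightarrow> real)
    \<Rightarrow> ('s \<Rightarrow> 'a \<Rightarrow> real) \<Rightarrow> 's \<Rightarrow> 'a \<Rightarrow> real" where
  "occ \<gamma> \<rho> P \<pi> s a = (\<Sum>t. \<gamma> ^ t * (state_dist P \<rho> \<pi> t s * \<pi> s a))"

text \<open>Phi^T mu, with Phi given as Phi s a k (row (s,a), column k).\<close>
definition feat :: "('s::finite \<Rightarrow> 'a::finite \<Rightarrow> 'c::finite \<Rightarrow> real) \<Rightarrow> ('s \<Rightarrow> 'a \<Rightarrow> real) \<Rightarrow> 'c \<Rightarrow> real" where
  "feat \<Phi> \<mu> k = (\<Sum>s\<in>UNIV. \<Sum>a\<in>UNIV. \<Phi> s a k * \<mu> s a)"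

definition cal_obj :: "real \<Rightarrow> ('s::finite \<Rightarrow> real) \<Rightarrow> ('i::finite \<Rightarrow> 's \<Rightarrow> 'a::finite \<Rightarrow> 's \<Rightarrow> real)
    \<Rightarrow> ('i \<Rightarrow> 's \<Rightarrow> 'a \<Rightarrow> real) \<Rightarrow> ('s \<Rightarrow> 'a \<Rightarrow> 'c::finite \<Rightarrow> real)
    \<Rightarrow> ('i \<Rightarrow> 's \<Rightarrow> 'a \<Rightarrow> real) \<Rightarrow> real" where
  "cal_obj \<gamma> \<rho> P \<pi>E \<Phi> \<pi>s =
     (\<Sum>i\<in>UNIV. \<Sum>k\<in>UNIV.
        \<bar>feat \<Phi> (occ \<gamma> \<rho> (P i) (\<pi>s i)) k - feat \<Phi> (occ \<gamma> \<rho> (P i) (\<pi>E i)) k\<bar>)"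

definition feas :: "real \<Rightarrow> (('i \<Rightarrow> 's::finite \<Rightarrow> 'a::finite \<Rightarrow> real) \<times> ('s \<Rightarrow> 'a \<Rightarrow> real)) set" where
  "feas \<epsilon> = {(\<pi>s, \<pi>c). (\<forall>i. \<pi>s i \<in> policies) \<and> \<pi>c \<in> policies \<and>
                         (\<forall>i. linf_dist (\<pi>s i) \<pi>c \<le> \<epsilon>)}"

definition S_CAL :: "real \<Rightarrow> ('s::finite \<Rightarrow> real) \<Rightarrow> ('i::finite \<Rightarrow> 's \<Rightarrow> 'a::finite \<Rightarrow> 's \<Rightarrow> real)
    \<Rightarrow> ('i \<Rightarrow> 's \<Rightarrow> 'a \<Rightarrow> real) \<Rightarrow> ('s \<Rightarrow> 'a \<Rightarrow> 'c::finite \<Rightarrow> real) \<Rightarrow> real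
    \<Rightarrow> (('i \<Rightarrow> 's \<Rightarrow> 'a \<Rightarrow> real) \<times> ('s \<Rightarrow> 'a \<Rightarrow> real)) set" where
  "S_CAL \<gamma> \<rho> P \<pi>E \<Phi> \<epsilon> =
     {x \<in> feas \<epsilon>. \<forall>y \<in> feas \<epsilon>. cal_obj \<gamma> \<rho> P \<pi>E \<Phi> (fst x) \<le> cal_obj \<gamma> \<rho> P \<pi>E \<Phi> (fst y)}"

definition usc_at :: "('x::topological_space \<Rightarrow> 'y::topological_space set) \<Rightarrow> 'x set \<Rightarrow> 'x \<Rightarrow> bool" where
  "usc_at F D x0 \<longleftrightarrow>
     (\<forall>U. open U \<and> F x0 \<subseteq> U \<longrightarrow> (\<exists>W. open W \<and> x0 \<in> W \<and> (\<forall>x \<in> W \<inter> D. F x \<subseteq> U)))"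

end

theory Submission
  imports Defs
begin

theorem lemma4:
  fixes \<gamma> :: real
    and \<rho> :: "'s::finite \<Rightarrow> real"
    and P :: "'i::finite \<Rightarrow> 's \<Rightarrow> 'a::finite \<Rightarrow> 's \<Rightarrow> real"
    and \<pi>E :: "'i \<Rightarrow> 's \<Rightarrow> 'a \<Rightarrow> real"
    and \<Phi> :: "'s \<Rightarrow> 'a \<Rightarrow> 'c::finite \<Rightarrow> real"
  assumes "0 < \<gamma>" and "\<gamma> < 1"
    and "\<forall>s. 0 \<le> \<rho> s" and "(\<Sum>s\<in>UNIV. \<rho> s) = 1"
    and "\<forall>i s a s'. 0 \<le> P i s a s'" and "\<forall>i s a. (\<Sum>s'\<in>UNIV. P i s a s') = 1"
    and "\<forall>i. \<pi>E i \<in> policies"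
    and "\<forall>s a k. \<bar>\<Phi> s a k\<bar> \<le> 1"
  shows "usc_at (S_CAL \<gamma> \<rho> P \<pi>E \<Phi>) {0..1} 0"
proof -
  have compact_PiE_UNIV: "compact (PiE (UNIV::'ii set) (\<lambda>_. S))" if "compact S" for S :: "'b::topological_space set"
  proof -
    have "compactin (product_topology (\<lambda>_. euclidean) (UNIV::'ii set)) (PiE UNIV (\<lambda>_. S))"
      using that by (simp add: compactin_PiE)
    then show ?thesis by (simp add: euclidean_product_topology)
  qed
  have cont_eval2: "continuous_on A (\<lambda>\<pi>::'ss \<Rightarrow> 'aa \<Rightarrow> 'b::topological_space. \<pi> s a)" for A s a
    using continuous_on_product_then_coordinatewise[OF continuous_on_product_then_coordinatewise[OF continuous_on_id, of A s], of a]
    by simp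
  have policies_bounds: "0 \<le> \<pi> s a \<and> \<pi> s a \<le> 1" if "\<pi> \<in> policies" for \<pi> :: "'ss::finite \<Rightarrow> 'aa::finite \<Rightarrow> real" and s a
  proof -
    have "\<pi> s a \<le> (\<Sum>a\<in>UNIV. \<pi> s a)"
      by (rule member_le_sum) (use that in \<open>auto simp: policies_def\<close>)
    then show ?thesis using that by (simp add: policies_def)
  qed
  have compact_policies: "compact (policies :: ('s \<Rightarrow> 'a \<Rightarrow> real) set)"
  proof -
    let ?B = "PiE (UNIV::'s set) (\<lambda>_. PiE (UNIV::'a set) (\<lambda>_. {0..1::real}))"
    have cB: "compact ?B" by (intro compact_PiE_UNIV compact_Icc)
    have cl: "closed (policies :: ('s \<Rightarrow> 'a \<Rightarrow> real) set)"
    proof -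
      have peq: "policies = (\<Inter>s. \<Inter>a. {\<pi>::'s\<Rightarrow>'a\<Rightarrow>real. 0 \<le> \<pi> s a}) \<inter> (\<Inter>s. {\<pi>. (\<Sum>a\<in>UNIV. \<pi> s a) = 1})"
        by (auto simp: policies_def)
      have c1: "closed {\<pi>::'s\<Rightarrow>'a\<Rightarrow>real. 0 \<le> \<pi> s a}" for s a
        by (intro closed_Collect_le continuous_on_const cont_eval2)
      have c2: "closed {\<pi>::'s\<Rightarrow>'a\<Rightarrow>real. (\<Sum>a\<in>UNIV. \<pi> s a) = 1}" for s
        by (intro closed_Collect_eq continuous_on_const continuous_on_sum cont_eval2)
      show ?thesis unfolding peq
        by (intro closed_Int closed_INT ballI c1 c2)
    qed
    have "policies \<subseteq> ?B" using policies_bounds by fastforce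
    then have "policies = ?B \<inter> policies" by blast
    then show ?thesis using compact_Int_closed[OF cB cl] by simp
  qed
  have cont_state_dist: "continuous_on A (\<lambda>\<pi>. state_dist Q \<rho> \<pi> t s)"
    for A and Q :: "'s \<Rightarrow> 'a \<Rightarrow> 's \<Rightarrow> real" and t s
  proof (induction t arbitrary: s)
    case 0 then show ?case by simp
  next
    case (Suc t) then show ?case by (simp, intro continuous_intros cont_eval2) auto
  qed
  have state_dist_props: "(\<forall>s. 0 \<le> state_dist Q \<rho> \<pi> t s) \<and> (\<Sum>s\<in>UNIV. state_dist Q \<rho> \<pi> t s) = 1"
    if a3: "\<forall>s a s'. 0 \<le> Q s a s'" and a4: "\<forall>s a. (\<Sum>s'\<in>UNIV. Q s a s') = 1" and a5: "\<pi> \<in> policies"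
    for Q :: "'s \<Rightarrow> 'a \<Rightarrow> 's \<Rightarrow> real" and \<pi> t
  proof (induction t)
    case 0 then show ?case using assms(3,4) by simp
  next
    case (Suc t)
    have nn: "0 \<le> \<pi> s a" for s a using a5 by (simp add: policies_def)
    have "(\<Sum>s'\<in>UNIV. \<Sum>s\<in>UNIV. \<Sum>a\<in>UNIV. state_dist Q \<rho> \<pi> t s * \<pi> s a * Q s a s')
        = (\<Sum>s\<in>UNIV. \<Sum>s'\<in>UNIV. \<Sum>a\<in>UNIV. state_dist Q \<rho> \<pi> t s * \<pi> s a * Q s a s')"
      by (rule sum.swap)
    also have "\<dots> = (\<Sum>s\<in>UNIV. \<Sum>a\<in>UNIV. \<Sum>s'\<in>UNIV. state_dist Q \<rho> \<pi> t s * \<pi> s a * Q s a s')"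
      by (rule sum.cong[OF refl], rule sum.swap)
    also have "\<dots> = (\<Sum>s\<in>UNIV. \<Sum>a\<in>UNIV. state_dist Q \<rho> \<pi> t s * \<pi> s a * (\<Sum>s'\<in>UNIV. Q s a s'))"
      by (simp add: sum_distrib_left)
    also have "\<dots> = (\<Sum>s\<in>UNIV. state_dist Q \<rho> \<pi> t s * (\<Sum>a\<in>UNIV. \<pi> s a))"
      using a4 by (simp add: sum_distrib_left)
    also have "\<dots> = 1" using a5 Suc by (simp add: policies_def)
    finally show ?case using Suc nn a3
      by (auto intro!: sum_nonneg mult_nonneg_nonneg)
  qed
  have cont_occ: "continuous_on policies (\<lambda>\<pi>. occ \<gamma> \<rho> Q \<pi> s a)"
    if a3: "\<forall>s a s'. 0 \<le> Q s a s'" and a4: "\<forall>s a. (\<Sum>s'\<in>UNIV. Q s a s') = 1"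
    for Q :: "'s \<Rightarrow> 'a \<Rightarrow> 's \<Rightarrow> real" and s a
  proof -
    let ?f = "\<lambda>t \<pi>. \<gamma> ^ t * (state_dist Q \<rho> \<pi> t s * \<pi> s a)"
    have ul: "uniform_limit policies (\<lambda>n x. \<Sum>i<n. ?f i x) (\<lambda>x. suminf (\<lambda>i. ?f i x)) sequentially"
    proof (rule Weierstrass_m_test)
      show "summable (\<lambda>n. \<gamma> ^ n)" using assms by (simp add: summable_geometric)
      fix n and x :: "'s \<Rightarrow> 'a \<Rightarrow> real" assume x: "x \<in> policies"
      have sd: "0 \<le> state_dist Q \<rho> x n s" "(\<Sum>s\<in>UNIV. state_dist Q \<rho> x n s) = 1"
        using state_dist_props[OF a3 a4 x, of n] by auto
      have "state_dist Q \<rho> x n s \<le> (\<Sum>s\<in>UNIV. state_dist Q \<rho> x n s)"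
        by (rule member_le_sum) (use state_dist_props[OF a3 a4 x, of n] in auto)
      then have sd1: "state_dist Q \<rho> x n s \<le> 1" using sd by simp
      have "\<bar>state_dist Q \<rho> x n s * x s a\<bar> \<le> 1"
        using sd sd1 policies_bounds[OF x, of s a] by (simp add: abs_mult mult_le_one)
      then show "norm (?f n x) \<le> \<gamma> ^ n" using assms(1)
        by (simp add: abs_mult mult_left_le)
    qed
    have "continuous_on policies (\<lambda>x. suminf (\<lambda>i. ?f i x))"
      by (rule uniform_limit_theorem[OF _ ul])
         (auto intro!: always_eventually continuous_intros cont_eval2 cont_state_dist)
    then show ?thesis by (simp add: occ_def)
  qed
  have cont_app2: "continuous_on A (\<lambda>x. h x s a)"
    if "continuous_on A h" for A and h :: "'x::topological_space \<Rightarrow> 'ss \<Rightarrow> 'aa \<Rightarrow> 'bb::topological_space" and s a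
    using continuous_on_product_then_coordinatewise[OF continuous_on_product_then_coordinatewise[OF that, of s], of a] .
  have linf_self: "linf_dist \<pi> \<pi> = 0" for \<pi> :: "'s \<Rightarrow> 'a \<Rightarrow> real"
  proof -
    have "(\<lambda>(s,a). \<bar>\<pi> s a - \<pi> s a\<bar>) ` (UNIV :: ('s \<times> 'a) set) = {0::real}"
      by auto
    then show ?thesis by (simp add: linf_dist_def)
  qed
  have linf_ge: "\<bar>\<pi> s a - \<pi>' s a\<bar> \<le> linf_dist \<pi> \<pi>'" for \<pi> \<pi>' :: "'s \<Rightarrow> 'a \<Rightarrow> real" and s a
    unfolding linf_dist_def by (rule Max_ge) auto
  have linf_le0: "linf_dist \<pi> \<pi>' \<le> 0" if "\<And>s a. \<pi> s a = \<pi>' s a" for \<pi> \<pi>' :: "'s \<Rightarrow> 'a \<Rightarrow> real"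
    unfolding linf_dist_def using that by (subst Max_le_iff) auto

  define F where "F = (\<lambda>\<pi>s. cal_obj \<gamma> \<rho> P \<pi>E \<Phi> \<pi>s)"
  define K where "K = {x::(('i\<Rightarrow>'s\<Rightarrow>'a\<Rightarrow>real)\<times>('s\<Rightarrow>'a\<Rightarrow>real)). (\<forall>i. fst x i \<in> policies) \<and> snd x \<in> policies}"
  define g where "g = (\<lambda>x::(('i\<Rightarrow>'s\<Rightarrow>'a\<Rightarrow>real)\<times>('s\<Rightarrow>'a\<Rightarrow>real)).
      \<Sum>i\<in>UNIV. \<Sum>s\<in>UNIV. \<Sum>a\<in>UNIV. \<bar>fst x i s a - snd x s a\<bar>)"
  define M where "M = real (CARD('i) * CARD('s) * CARD('a))"
  have Mpos: "M > 0" unfolding M_def by simp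
  have K_eq: "K = PiE UNIV (\<lambda>_. policies) \<times> policies"
    by (auto simp: K_def PiE_UNIV_domain)
  have cK: "compact K" unfolding K_eq
    by (intro compact_Times compact_PiE_UNIV compact_policies)
  have feasK: "feas \<epsilon> \<subseteq> K" for \<epsilon> by (auto simp: feas_def K_def)
  have feas_mono: "feas 0 \<subseteq> feas \<epsilon>" if "0 \<le> \<epsilon>" for \<epsilon>
    unfolding feas_def using that by (auto intro: order_trans)
  have cfst: "continuous_on A (\<lambda>x::(('i\<Rightarrow>'s\<Rightarrow>'a\<Rightarrow>real)\<times>('s\<Rightarrow>'a\<Rightarrow>real)). fst x i)" for A i
    by (rule continuous_on_product_then_coordinatewise[OF continuous_on_fst[OF continuous_on_id]])
  have cfst3: "continuous_on A (\<lambda>x::(('i\<Rightarrow>'s\<Rightarrow>'a\<Rightarrow>real)\<times>('s\<Rightarrow>'a\<Rightarrow>real)). fst x i s a)" for A i s a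
    by (rule cont_app2[OF cfst])
  have csnd2: "continuous_on A (\<lambda>x::(('i\<Rightarrow>'s\<Rightarrow>'a\<Rightarrow>real)\<times>('s\<Rightarrow>'a\<Rightarrow>real)). snd x s a)" for A s a
    by (rule cont_app2[OF continuous_on_snd[OF continuous_on_id]])
  have occ_comp: "continuous_on K (\<lambda>x. occ \<gamma> \<rho> (P i) (fst x i) s a)" for i s a
  proof (rule continuous_on_compose2[OF cont_occ cfst])
    show "(\<lambda>x. fst x i) ` K \<subseteq> policies" by (auto simp: K_def)
  qed (use assms in auto)
  have contF: "continuous_on K (\<lambda>x. F (fst x))"
    unfolding F_def cal_obj_def feat_def
    by (intro continuous_intros occ_comp)
  have contg: "continuous_on A g" for A
    unfolding g_def
    by (intro continuous_intros cfst3 csnd2)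
  have Fnn: "0 \<le> F \<pi>s" for \<pi>s unfolding F_def cal_obj_def by (intro sum_nonneg) auto
  obtain i0 :: 'i where True by simp
  have ne0: "((\<lambda>_. \<pi>E i0), \<pi>E i0) \<in> feas 0"
    using assms(7) by (auto simp: feas_def linf_self)
  have g0: "x \<in> feas 0" if "x \<in> K" "g x \<le> 0" for x
  proof -
    have "0 \<le> g x" unfolding g_def by (intro sum_nonneg) auto
    then have "g x = 0" using that(2) by linarith
    then have "\<forall>i\<in>UNIV. (\<Sum>s\<in>UNIV. \<Sum>a\<in>UNIV. \<bar>fst x i s a - snd x s a\<bar>) = 0"
      unfolding g_def by (subst sum_nonneg_eq_0_iff[symmetric]) (auto intro!: sum_nonneg)
    then have "\<forall>i s. (\<Sum>a\<in>UNIV. \<bar>fst x i s a - snd x s a\<bar>) = 0"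
      by (subst (asm) sum_nonneg_eq_0_iff) (auto intro!: sum_nonneg)
    then have "\<forall>i s a. fst x i s a = snd x s a"
      by (subst (asm) sum_nonneg_eq_0_iff) auto
    then show ?thesis using that(1) by (auto simp: feas_def K_def intro!: linf_le0)
  qed
  have gle: "g x \<le> M * \<epsilon>" if "x \<in> feas \<epsilon>" for x \<epsilon>
  proof -
    have "\<bar>fst x i s a - snd x s a\<bar> \<le> \<epsilon>" for i s a
    proof -
      have "linf_dist (fst x i) (snd x) \<le> \<epsilon>" using that by (auto simp: feas_def)
      then show ?thesis using linf_ge[of "fst x i" s a "snd x"] by linarith
    qed
    then have "g x \<le> (\<Sum>i\<in>(UNIV::'i set). \<Sum>s\<in>(UNIV::'s set). \<Sum>a\<in>(UNIV::'a set). \<epsilon>)"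
      unfolding g_def by (intro sum_mono) auto
    then show ?thesis by (simp add: M_def algebra_simps)
  qed
  show ?thesis unfolding usc_at_def
  proof (intro allI impI)
    fix U assume U: "open U \<and> S_CAL \<gamma> \<rho> P \<pi>E \<Phi> 0 \<subseteq> U"
    have cC: "compact (K - U)" using compact_diff cK U by blast
    show "\<exists>W. open W \<and> 0 \<in> W \<and> (\<forall>x\<in>W \<inter> {0..1}. S_CAL \<gamma> \<rho> P \<pi>E \<Phi> x \<subseteq> U)"
    proof (cases "K - U = {}")
      case True
      then show ?thesis
        by (intro exI[of _ UNIV]) (use feasK in \<open>auto simp: S_CAL_def\<close>)
    next
      case False
      define m0 where "m0 = Inf ((\<lambda>y. F (fst y)) ` feas 0)"
      define \<phi> where "\<phi> = (\<lambda>x. max (g x) (F (fst x) - m0))"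
      have bdd: "bdd_below ((\<lambda>y. F (fst y)) ` feas 0)"
        using Fnn by (intro bdd_belowI[of _ 0]) auto
      have "continuous_on (K - U) \<phi>" unfolding \<phi>_def
        by (intro continuous_intros contg continuous_on_subset[OF contF]) auto
      then obtain x0 where x0: "x0 \<in> K - U" "\<forall>y\<in>K - U. \<phi> x0 \<le> \<phi> y"
        using continuous_attains_inf[OF cC False] by blast
      have dpos: "\<phi> x0 > 0"
      proof (rule ccontr)
        assume "\<not> \<phi> x0 > 0"
        then have h: "g x0 \<le> 0" "F (fst x0) \<le> m0" unfolding \<phi>_def by auto
        have f0: "x0 \<in> feas 0" using g0 h x0 by blast
        have "x0 \<notin> S_CAL \<gamma> \<rho> P \<pi>E \<Phi> 0" using x0 U by blast
        then obtain y where y: "y \<in> feas 0" "F (fst y) < F (fst x0)"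
          using f0 unfolding S_CAL_def F_def by force
        have "m0 \<le> F (fst y)" unfolding m0_def by (rule cInf_lower) (use y bdd in auto)
        then show False using h y by simp
      qed
      show ?thesis
      proof (intro exI[of _ "{..< \<phi> x0 / M}"] conjI ballI subsetI)
        show "open {..< \<phi> x0 / M}" by simp
        show "0 \<in> {..< \<phi> x0 / M}" using dpos Mpos by simp
        fix \<epsilon> x assume e: "\<epsilon> \<in> {..< \<phi> x0 / M} \<inter> {0..1}" and x: "x \<in> S_CAL \<gamma> \<rho> P \<pi>E \<Phi> \<epsilon>"
        have xf: "x \<in> feas \<epsilon>" and xmin: "\<forall>y\<in>feas \<epsilon>. F (fst x) \<le> F (fst y)"
          using x unfolding S_CAL_def F_def by auto
        have "g x \<le> M * \<epsilon>" using gle xf .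
        also have "\<dots> < \<phi> x0" using e Mpos by (simp add: pos_less_divide_eq mult.commute)
        finally have g1: "g x < \<phi> x0" .
        have "F (fst x) \<le> m0" unfolding m0_def
          by (rule cInf_greatest) (use ne0 xmin feas_mono e in auto)
        then have "\<phi> x < \<phi> x0" using g1 dpos unfolding \<phi>_def by simp
        then show "x \<in> U" using x0 xf feasK by force
      qed
    qed
  qed
qed

end
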